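(* Let $\alpha,\beta\in(0,\pi)$ with $\alpha+\beta\ge\pi$. Then \[ P(S_{\alpha,\beta})=\frac{1}{\sin\frac{\min\{\alpha,\beta,\alpha+\beta-\pi\}}{2}}, \] with the convention $1/\sin 0=+\infty$.
   Context: For $\alpha\in(0,2\pi)$, $S_\alpha=\{re^{it}: r>0,\ t\in(0,\alpha)\}$. For $\alpha,\beta\in(0,\pi)$ with $\alpha+\beta\ge\pi$ the double angular domain is \[ S_{\alpha,\beta}=S_\alpha\cap\{1+re^{it}: r>0,\ t\in(\pi-\beta,\pi)\}, \] whose boundary in $\overline{\mathbb{C}}$ is the Jordan curve formed by the segment $[0,1]$, two rays and the point $\infty$. For four distinct points $a,b,c,d\in\overline{\mathbb{C}}$ set $p(a,b,c,d)=\frac{|a-b||c-d|+|a-d||b-c|}{|a-c||b-d|}$, with the expression understood as a limit (factors containing $\infty$ cancelled) if one point is $\infty$. For a domain $D\subset\overline{\mathbb{C}}$ with Jordan boundary, $P(D)=\sup p(a,b,c,d)$ over all distinct $a,b,c,d\in\partial D$ occurring in this order along the positively oriented boundary. *)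

theory Defs
  imports Complex_Main "HOL-Library.Extended_Real"
begin

definition S_ang :: "real \<Rightarrow> complex set" where
  "S_ang \<alpha> = {of_real r * cis t | r t. r > 0 \<and> 0 < t \<and> t < \<alpha>}"

definition S_double :: "real \<Rightarrow> real \<Rightarrow> complex set" where
  "S_double \<alpha> \<beta> = S_ang \<alpha> \<inter> {1 + of_real r * cis t | r t. r > 0 \<and> pi - \<beta> < t \<and> t < pi}"

text \<open>Points of the extended plane: None is the point at infinity.\<close>

text \<open>The cross-ratio-type quantity p(a,b,c,d); if one point is infinity, the
  factors containing it are cancelled (this is the limit value).\<close>
fun pq :: "complex option \<Rightarrow> complex option \<Rightarrow> complex option \<Rightarrow> complex option \<Rightarrow> real" where
  "pq (Some a) (Some b) (Some c) (Some d) =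
     (cmod (a - b) * cmod (c - d) + cmod (a - d) * cmod (b - c)) / (cmod (a - c) * cmod (b - d))"
| "pq (Some a) (Some b) (Some c) None = (cmod (a - b) + cmod (b - c)) / cmod (a - c)"
| "pq (Some a) (Some b) None (Some d) = (cmod (a - b) + cmod (a - d)) / cmod (b - d)"
| "pq (Some a) None (Some c) (Some d) = (cmod (c - d) + cmod (a - d)) / cmod (a - c)"
| "pq None (Some b) (Some c) (Some d) = (cmod (c - d) + cmod (b - c)) / cmod (b - d)"
| "pq _ _ _ _ = 0"

text \<open>Positively oriented parametrisation of the boundary of S_double alpha beta:
  parameter t in real \<union> {infinity}.\<close>
definition bd_param :: "real \<Rightarrow> real \<Rightarrow> real \<Rightarrow> complex" where
  "bd_param \<alpha> \<beta> t =
     (if t \<le> 0 then of_real (- t) * cis \<alpha>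
      else if t \<le> 1 then of_real t
      else 1 + of_real (t - 1) * cis (pi - \<beta>))"

definition bd_pt :: "real \<Rightarrow> real \<Rightarrow> real option \<Rightarrow> complex option" where
  "bd_pt \<alpha> \<beta> x = map_option (bd_param \<alpha> \<beta>) x"

fun olt :: "real option \<Rightarrow> real option \<Rightarrow> bool" where
  "olt (Some s) (Some t) = (s < t)"
| "olt (Some s) None = True"
| "olt None _ = False"

definition cyc_ord4 :: "real option \<Rightarrow> real option \<Rightarrow> real option \<Rightarrow> real option \<Rightarrow> bool" where
  "cyc_ord4 x1 x2 x3 x4 =
     ((olt x1 x2 \<and> olt x2 x3 \<and> olt x3 x4) \<or> (olt x2 x3 \<and> olt x3 x4 \<and> olt x4 x1) \<or>
      (olt x3 x4 \<and> olt x4 x1 \<and> olt x1 x2) \<or> (olt x4 x1 \<and> olt x1 x2 \<and> olt x2 x3))"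

definition P_double :: "real \<Rightarrow> real \<Rightarrow> ereal" where
  "P_double \<alpha> \<beta> = Sup {ereal (pq (bd_pt \<alpha> \<beta> x1) (bd_pt \<alpha> \<beta> x2) (bd_pt \<alpha> \<beta> x3) (bd_pt \<alpha> \<beta> x4))
                          | x1 x2 x3 x4. cyc_ord4 x1 x2 x3 x4}"

end

theory Submission
  imports Defs
begin


definition sec :: "real \<Rightarrow> real \<Rightarrow> complex \<Rightarrow> bool" where
 "sec a b v \<longleftrightarrow> 0 \<le> Im (v * cis (-a)) \<and> Im (v * cis (-b)) \<le> 0 \<and> 0 \<le> Re (v * cis (-((a+b)/2)))"

lemma sec_add: "sec a b u \<Longrightarrow> sec a b v \<Longrightarrow> sec a b (u+v)"
  unfolding sec_def by (simp add: distrib_right)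

lemma sec_scale: "0 \<le> c \<Longrightarrow> sec a b v \<Longrightarrow> sec a b (of_real c * v)"
  unfolding sec_def by (auto simp: mult.assoc intro: mult_nonneg_nonneg mult_nonneg_nonpos)

lemma sec_zero: "sec a b 0" unfolding sec_def by simp

lemma sec_cis: assumes "a \<le> p" "p \<le> b" "b \<le> a + pi" shows "sec a b (cis p)"
proof -
  have "Im (cis p * cis (-a)) = sin (p - a)" by (simp add: cis_mult)
  moreover have "sin (p-a) \<ge> 0" using assms by (intro sin_ge_zero) auto
  moreover have "Im (cis p * cis (-b)) = sin (p - b)" by (simp add: cis_mult)
  moreover have "sin (p-b) \<le> 0" using assms sin_ge_zero[of "b - p"] sin_minus[of "b - p"] by auto
  moreover have "Re (cis p * cis (-((a+b)/2))) = cos (p - (a+b)/2)" by (simp add: cis_mult)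
  moreover have "cos (p - (a+b)/2) \<ge> 0" using assms by (intro cos_ge_zero) (auto simp: field_simps)
  ultimately show ?thesis unfolding sec_def by simp
qed

lemma upper_polar:
  assumes "0 \<le> Im w"
  shows "\<exists>p. 0 \<le> p \<and> p \<le> pi \<and> w = of_real (cmod w) * cis p"
proof (cases "w = 0")
  case True then show ?thesis by (intro exI[of _ 0]) simp
next
  case False
  define c where "c = Re w / cmod w"
  have n: "cmod w > 0" using False by simp
  have c1: "-1 \<le> c" "c \<le> 1" using abs_Re_le_cmod[of w] n unfolding c_def
    by (auto simp: divide_simps abs_le_iff)
  define p where "p = arccos c"
  have p: "0 \<le> p" "p \<le> pi" using c1 unfolding p_def by (auto intro: arccos_lbound arccos_ubound)
  have cp: "cos p = c" using c1 unfolding p_def by simp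
  have "sin p = sqrt (1 - c^2)" unfolding p_def using c1 by (simp add: sin_arccos)
  also have "1 - c^2 = (Im w / cmod w)^2"
    using n False unfolding c_def by (simp add: field_simps cmod_power2 add_divide_distrib[symmetric] complex_eq_iff) blast
  also have "sqrt \<dots> = Im w / cmod w" using assms n by simp
  finally have sp: "sin p = Im w / cmod w" .
  have "w = of_real (cmod w) * cis p"
    using n by (intro complex_eqI) (simp_all add: cp sp c_def)
  with p show ?thesis by blast
qed

lemma sec_polar:
  assumes "sec a b v" "a \<le> b" "b \<le> a + pi"
  shows "\<exists>p. a \<le> p \<and> p \<le> b \<and> v = of_real (cmod v) * cis p"
proof (cases "v = 0")
  case True then show ?thesis using assms by (intro exI[of _ a]) simp
next
  case False
  define u where "u = v * cis (-a)"
  have "0 \<le> Im u" using assms(1) unfolding sec_def u_def by simp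
  then obtain q where q: "0 \<le> q" "q \<le> pi" "u = of_real (cmod u) * cis q" using upper_polar by blast
  have nu: "cmod u = cmod v" unfolding u_def by (simp add: norm_mult)
  have v: "v = of_real (cmod v) * cis (q + a)"
  proof -
    have "v = u * cis a" unfolding u_def by (simp add: mult.assoc cis_mult)
    also have "\<dots> = of_real (cmod v) * cis (q + a)" using q(3) nu by (metis cis_mult mult.assoc)
    finally show ?thesis .
  qed
  have n: "cmod v > 0" using False by simp
  have "Im (v * cis (-b)) = cmod v * sin (q + a - b)" by (subst v) (simp add: mult.assoc cis_mult)
  hence s1: "sin (q + a - b) \<le> 0" using assms(1) n unfolding sec_def by (simp add: mult_le_0_iff)
  have "Re (v * cis (-((a+b)/2))) = cmod v * cos (q + a - (a+b)/2)" by (subst v) (simp add: mult.assoc cis_mult)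
  hence s2: "cos (q + a - (a+b)/2) \<ge> 0" using assms(1) n unfolding sec_def by (simp add: zero_le_mult_iff)
  have "q \<le> b - a"
  proof (rule ccontr)
    assume "\<not> q \<le> b - a"
    show False
    proof (cases "q + a - b < pi")
      case True
      have "sin (q + a - b) > 0" using True \<open>\<not> q \<le> b - a\<close> by (intro sin_gt_zero) auto
      then show False using s1 by simp
    next
      case False
      hence "q = pi" "a = b" using q assms by auto
      then show False using s2 by simp
    qed
  qed
  then show ?thesis using v q by (intro exI[of _ "q + a"]) auto
qed

lemma sec_comb:
  assumes "b \<le> a + pi" "\<forall>i\<in>set L. fst i \<ge> 0 \<and> a \<le> snd i \<and> snd i \<le> b"
  shows "sec a b (\<Sum>i\<leftarrow>L. of_real (fst i) * cis (snd i))"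
  using assms(2)
proof (induction L)
  case Nil then show ?case by (simp add: sec_zero)
next
  case (Cons x L)
  then show ?case using assms(1) by (auto intro!: sec_add sec_scale sec_cis)
qed

definition th :: "real \<Rightarrow> real \<Rightarrow> real \<Rightarrow> real" where
  "th al be t = (if t \<le> 0 then al - pi else if t \<le> 1 then 0 else pi - be)"

lemma fwd_sec:
  assumes al: "0 < al" "al < pi" and be: "0 < be" "be < pi" "al + be \<ge> pi" and tt: "t < t'"
  shows "sec (th al be t) (pi - be) (bd_param al be t' - bd_param al be t)"
proof -
  have ca: "cis (al - pi) = - cis al" by (simp add: cis_def complex_eq_iff cos_diff sin_diff)
  consider "t \<le> 0" "t' \<le> 0" | "t \<le> 0" "0 < t'" "t' \<le> 1" | "t \<le> 0" "1 < t'"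
    | "0 < t" "t \<le> 1" "t' \<le> 1" | "0 < t" "t \<le> 1" "1 < t'" | "1 < t" using tt by linarith
  then show ?thesis
  proof cases
    case 1
    have "bd_param al be t' - bd_param al be t = (\<Sum>i\<leftarrow>[(t'-t, al - pi)]. of_real (fst i) * cis (snd i))"
      using 1 by (simp add: bd_param_def ca algebra_simps)
    also have "sec (th al be t) (pi - be) \<dots>" using 1 al be tt by (intro sec_comb) (auto simp: th_def)
    finally show ?thesis .
  next
    case 2
    have "bd_param al be t' - bd_param al be t = (\<Sum>i\<leftarrow>[(-t, al - pi), (t', 0)]. of_real (fst i) * cis (snd i))"
      using 2 by (simp add: bd_param_def ca algebra_simps)
    also have "sec (th al be t) (pi - be) \<dots>" using 2 al be tt by (intro sec_comb) (auto simp: th_def)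
    finally show ?thesis .
  next
    case 3
    have "bd_param al be t' - bd_param al be t = (\<Sum>i\<leftarrow>[(-t, al - pi), (1, 0), (t' - 1, pi - be)]. of_real (fst i) * cis (snd i))"
      using 3 by (simp add: bd_param_def ca algebra_simps)
    also have "sec (th al be t) (pi - be) \<dots>" using 3 al be tt by (intro sec_comb) (auto simp: th_def)
    finally show ?thesis .
  next
    case 4
    have "bd_param al be t' - bd_param al be t = (\<Sum>i\<leftarrow>[(t' - t, 0)]. of_real (fst i) * cis (snd i))"
      using 4 tt by (simp add: bd_param_def algebra_simps)
    also have "sec (th al be t) (pi - be) \<dots>" using 4 al be tt by (intro sec_comb) (auto simp: th_def)
    finally show ?thesis .
  next
    case 5
    have "bd_param al be t' - bd_param al be t = (\<Sum>i\<leftarrow>[(1 - t, 0), (t' - 1, pi - be)]. of_real (fst i) * cis (snd i))"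
      using 5 tt by (simp add: bd_param_def algebra_simps)
    also have "sec (th al be t) (pi - be) \<dots>" using 5 al be tt by (intro sec_comb) (auto simp: th_def)
    finally show ?thesis .
  next
    case 6
    have "bd_param al be t' - bd_param al be t = (\<Sum>i\<leftarrow>[(t' - t, pi - be)]. of_real (fst i) * cis (snd i))"
      using 6 tt by (simp add: bd_param_def algebra_simps)
    also have "sec (th al be t) (pi - be) \<dots>" using 6 al be tt by (intro sec_comb) (auto simp: th_def)
    finally show ?thesis .
  qed
qed

lemma bwd_sec:
  assumes al: "0 < al" "al < pi" and be: "0 < be" "be < pi" "al + be \<ge> pi" and tt: "t' < t"
  shows "sec al (th al be t + pi) (bd_param al be t' - bd_param al be t)"
proof -
  have cb: "cis (2*pi - be) = - cis (pi - be)" by (simp add: cis_def complex_eq_iff cos_diff sin_diff)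
  have cb2: "cis (pi*2 - be) = - cis (pi - be)" using cb by (simp add: mult.commute)
  have cp: "cis pi = -1" by (simp add: cis_def complex_eq_iff)
  consider "t \<le> 0" | "0 < t" "t \<le> 1" "t' \<le> 0" | "0 < t" "t \<le> 1" "0 < t'"
    | "1 < t" "t' \<le> 0" | "1 < t" "0 < t'" "t' \<le> 1" | "1 < t" "1 < t'" using tt by linarith
  then show ?thesis
  proof cases
    case 1
    have "bd_param al be t' - bd_param al be t = (\<Sum>i\<leftarrow>[(t - t', al)]. of_real (fst i) * cis (snd i))"
      using 1 tt by (simp add: bd_param_def algebra_simps)
    also have "sec al (th al be t + pi) \<dots>" using 1 al be tt by (intro sec_comb) (auto simp: th_def)
    finally show ?thesis .
  next
    case 2
    have "bd_param al be t' - bd_param al be t = (\<Sum>i\<leftarrow>[(-t', al), (t, pi)]. of_real (fst i) * cis (snd i))"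
      using 2 tt by (simp add: bd_param_def algebra_simps cp)
    also have "sec al (th al be t + pi) \<dots>" using 2 al be tt by (intro sec_comb) (auto simp: th_def)
    finally show ?thesis .
  next
    case 3
    have "bd_param al be t' - bd_param al be t = (\<Sum>i\<leftarrow>[(t - t', pi)]. of_real (fst i) * cis (snd i))"
      using 3 tt by (simp add: bd_param_def algebra_simps cp)
    also have "sec al (th al be t + pi) \<dots>" using 3 al be tt by (intro sec_comb) (auto simp: th_def)
    finally show ?thesis .
  next
    case 4
    have "bd_param al be t' - bd_param al be t = (\<Sum>i\<leftarrow>[(-t', al), (1, pi), (t - 1, 2*pi - be)]. of_real (fst i) * cis (snd i))"
      using 4 tt by (simp add: bd_param_def algebra_simps cp cb cb2)
    also have "sec al (th al be t + pi) \<dots>" using 4 al be tt by (intro sec_comb) (auto simp: th_def)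
    finally show ?thesis .
  next
    case 5
    have "bd_param al be t' - bd_param al be t = (\<Sum>i\<leftarrow>[(1 - t', pi), (t - 1, 2*pi - be)]. of_real (fst i) * cis (snd i))"
      using 5 tt by (simp add: bd_param_def algebra_simps cp cb cb2)
    also have "sec al (th al be t + pi) \<dots>" using 5 al be tt by (intro sec_comb) (auto simp: th_def)
    finally show ?thesis .
  next
    case 6
    have "bd_param al be t' - bd_param al be t = (\<Sum>i\<leftarrow>[(t - t', 2*pi - be)]. of_real (fst i) * cis (snd i))"
      using 6 tt by (simp add: bd_param_def algebra_simps cb cb2)
    also have "sec al (th al be t + pi) \<dots>" using 6 al be tt by (intro sec_comb) (auto simp: th_def)
    finally show ?thesis .
  qed
qed

lemma polar_prod:
  assumes "u = of_real r1 * cis p1" "v = of_real r2 * cis p2" "0 \<le> r1" "0 \<le> r2"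
  shows "u * cnj v = of_real (r1 * r2) * cis (p1 - p2)" "cmod (u * cnj v) = r1 * r2"
  using assms by (simp_all add: cis_cnj cis_mult norm_mult) 

lemma triple:
  assumes al: "0 < al" "al < pi" and be: "0 < be" "be < pi" "al + be \<ge> pi" and xyz: "x < y" "y < z"
  defines "W \<equiv> (bd_param al be x - bd_param al be y) * cnj (bd_param al be z - bd_param al be y)"
  shows "0 \<le> Im W \<and> Re W \<le> cos (al + be - pi) * cmod W"
proof -
  define t where "t = th al be y"
  have t: "al - pi \<le> t" "t \<le> 0 \<or> t = pi - be" "t \<le> pi - be" using al be unfolding t_def th_def by auto
  have su: "sec al (t + pi) (bd_param al be x - bd_param al be y)"
    unfolding t_def using bwd_sec[OF al be xyz(1)] .
  have sv: "sec t (pi - be) (bd_param al be z - bd_param al be y)"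
    unfolding t_def using fwd_sec[OF al be xyz(2)] .
  obtain p1 where p1: "al \<le> p1" "p1 \<le> t + pi" "bd_param al be x - bd_param al be y = of_real (cmod (bd_param al be x - bd_param al be y)) * cis p1"
    using sec_polar[OF su] t al be by fastforce
  obtain p2 where p2: "t \<le> p2" "p2 \<le> pi - be" "bd_param al be z - bd_param al be y = of_real (cmod (bd_param al be z - bd_param al be y)) * cis p2"
    using sec_polar[OF sv] t al be by fastforce
  define r where "r = cmod (bd_param al be x - bd_param al be y) * cmod (bd_param al be z - bd_param al be y)"
  have r: "r \<ge> 0" unfolding r_def by simp
  have W: "W = of_real r * cis (p1 - p2)" "cmod W = r" unfolding W_def r_def
    using polar_prod[OF p1(3) p2(3)] by simp_all
  have d: "al + be - pi \<le> p1 - p2" "p1 - p2 \<le> pi" using p1 p2 by auto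
  have "sin (p1 - p2) \<ge> 0" using d al be by (intro sin_ge_zero) auto
  moreover have "cos (p1 - p2) \<le> cos (al + be - pi)" using d al be by (subst cos_mono_le_eq) auto
  ultimately have "0 \<le> r * sin (p1 - p2)" "r * cos (p1 - p2) \<le> r * cos (al + be - pi)"
    using r by (auto intro!: mult_left_mono mult_nonneg_nonneg simp del: cos_diff sin_diff cos_minus_pi)
  moreover have "Re W = r * cos (p1 - p2)" "Im W = r * sin (p1 - p2)" using W by (simp_all add: cis.sel)
  ultimately show ?thesis using W(2) by (simp only: mult.commute)
qed

lemma tri_bound:
  fixes p1 p2 :: complex
  assumes g: "0 \<le> g" "g \<le> pi" and h: "Re (p1 * cnj p2) \<le> cos g * (cmod p1 * cmod p2)"
  shows "(cmod p1 + cmod p2) * sin (g/2) \<le> cmod (p1 - p2)"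
proof -
  define r1 where "r1 = cmod p1"
  define r2 where "r2 = cmod p2"
  define k where "k = cos g"
  have k: "-1 \<le> k" unfolding k_def by simp
  have sq: "(sin (g/2))^2 = (1 - k)/2" unfolding k_def using cos_double_sin[of "g/2"] by simp
  have e: "(cmod (p1 - p2))^2 = r1^2 + r2^2 - 2 * Re (p1 * cnj p2)"
    unfolding r1_def r2_def by (simp only: cmod_power2) (simp add: power2_eq_square algebra_simps)
  have r: "0 \<le> r1" "0 \<le> r2" unfolding r1_def r2_def by simp_all
  have "((r1 + r2) * sin (g/2))^2 = (r1+r2)^2 * ((1-k)/2)" by (simp add: power_mult_distrib sq)
  also have "\<dots> \<le> r1^2 + r2^2 - 2 * k * (r1 * r2)"
  proof -
    have "r1^2 + r2^2 - 2 * k * (r1 * r2) - (r1+r2)^2 * ((1-k)/2) = (1 + k) * (r1 - r2)^2 / 2"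
      by (simp add: power2_eq_square algebra_simps divide_simps)
    moreover have "(1 + k) * (r1 - r2)^2 / 2 \<ge> 0" using k by simp
    ultimately show ?thesis by linarith
  qed
  also have "\<dots> \<le> (cmod (p1 - p2))^2" using e h unfolding r1_def r2_def k_def by simp
  finally have "((r1 + r2) * sin (g/2))^2 \<le> (cmod (p1 - p2))^2" .
  then show ?thesis unfolding r1_def r2_def by (rule power2_le_imp_le) simp
qed

lemma cis_sum_eq_one:
  assumes "cis s = 1" shows "\<exists>n::int. s = of_int n * (2 * pi)"
proof -
  have "cos s = 1" using assms by (simp add: complex_eq_iff)
  then obtain n :: int where "s = of_int n * 2 * pi" using cos_one_2pi_int by blast
  then show ?thesis by (intro exI[of _ n]) simp
qed

lemma quad_comb:
  fixes x1 x2 x4 :: complex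
  defines "W1 \<equiv> (x1 + x4 + x2) * cnj x1" and "W2 \<equiv> - x4 * cnj x2"
      and "W3 \<equiv> - x1 * cnj x4" and "W4 \<equiv> x2 * cnj (x1 + x4 + x2)"
  assumes g: "0 < g" "g \<le> pi"
    and im: "0 \<le> Im W1" "0 \<le> Im W2" "0 \<le> Im W3" "0 \<le> Im W4"
    and s2: "Re W2 \<le> cos g * cmod W2" and s3: "Re W3 \<le> cos g * cmod W3"
  shows "Re (W1 * W2) \<le> cos g * cmod (W1 * W2)"
proof (cases "W1 = 0 \<or> W2 = 0")
  case True then show ?thesis by auto
next
  case False
  hence nW: "W1 \<noteq> 0" "W2 \<noteq> 0" by auto
  from False have nz: "x1 \<noteq> 0" "x2 \<noteq> 0" "x4 \<noteq> 0" "x1 + x4 + x2 \<noteq> 0"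
    unfolding W1_def W2_def by auto
  have "cnj (x1+x4+x2) \<noteq> 0" using nz(4) by (simp only: complex_cnj_zero_iff) simp
  hence nz3: "W3 \<noteq> 0" "W4 \<noteq> 0" using nz unfolding W3_def W4_def by (auto simp del: complex_cnj_add)
  obtain q1 where q1: "0 \<le> q1" "q1 \<le> pi" "W1 = of_real (cmod W1) * cis q1" using upper_polar im(1) by blast
  obtain q2 where q2: "0 \<le> q2" "q2 \<le> pi" "W2 = of_real (cmod W2) * cis q2" using upper_polar im(2) by blast
  obtain q3 where q3: "0 \<le> q3" "q3 \<le> pi" "W3 = of_real (cmod W3) * cis q3" using upper_polar im(3) by blast
  obtain q4 where q4: "0 \<le> q4" "q4 \<le> pi" "W4 = of_real (cmod W4) * cis q4" using upper_polar im(4) by blast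
  obtain r1 r2 r3 r4 where r: "r1 = cmod W1" "r2 = cmod W2" "r3 = cmod W3" "r4 = cmod W4" by blast
  have eq: "W1 = of_real r1 * cis q1" "W2 = of_real r2 * cis q2" "W3 = of_real r3 * cis q3" "W4 = of_real r4 * cis q4"
    by (subst r(1), rule q1(3)) (subst r(2), rule q2(3), subst r(3), rule q3(3), subst r(4), rule q4(3))
  have ang: "g \<le> q" if "0 \<le> q" "q \<le> pi" "W = of_real (cmod W) * cis q" "W \<noteq> 0"
       "Re W \<le> cos g * cmod W" for W q
  proof -
    have "Re W = cmod W * cos q" by (subst that(3)) simp
    hence "cmod W * cos q \<le> cmod W * cos g" using that(5) by (simp add: mult.commute)
    hence "cos q \<le> cos g" using that(4) by simp
    then show ?thesis using that g by (subst (asm) cos_mono_le_eq) auto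
  qed
  have g2: "g \<le> q2" using ang[OF q2] False s2 by blast
  have g3: "g \<le> q3" using ang[OF q3] nz3 s3 by blast
  define R where "R = r1 * r2 * r3 * r4"
  have Rp: "R > 0" unfolding R_def using False nz3 r by simp
  have prod: "W1 * W2 * W3 * W4 = of_real (cmod x1 ^ 2 * cmod x2 ^ 2 * cmod x4 ^ 2 * cmod (x1 + x4 + x2) ^ 2)"
  proof -
    have "W1 * W2 * W3 * W4 = (x1 * cnj x1) * (x2 * cnj x2) * (x4 * cnj x4) * ((x1 + x4 + x2) * cnj (x1 + x4 + x2))"
      unfolding W1_def W2_def W3_def W4_def by (simp only: mult_minus_left mult_minus_right minus_minus mult.assoc mult.left_commute)
    also have "\<dots> = of_real (cmod x1 ^ 2 * cmod x2 ^ 2 * cmod x4 ^ 2 * cmod (x1 + x4 + x2) ^ 2)"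
      by (simp only: complex_norm_square of_real_mult)
    finally show ?thesis .
  qed
  have "W1 * W2 * W3 * W4 = of_real R * cis (q1 + q2 + q3 + q4)"
  proof -
    have "W1 * W2 * W3 * W4 = of_real R * (cis q1 * cis q2 * cis q3 * cis q4)"
      unfolding R_def eq by (simp add: mult_ac)
    also have "cis q1 * cis q2 * cis q3 * cis q4 = cis (q1 + q2 + q3 + q4)" by (simp add: cis_mult)
    finally show ?thesis .
  qed
  hence e: "of_real R * cis (q1 + q2 + q3 + q4) = of_real (cmod x1 ^ 2 * cmod x2 ^ 2 * cmod x4 ^ 2 * cmod (x1 + x4 + x2) ^ 2)"
    using prod by simp
  have e1: "R * cos (q1 + q2 + q3 + q4) = cmod x1 ^ 2 * cmod x2 ^ 2 * cmod x4 ^ 2 * cmod (x1 + x4 + x2) ^ 2"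
    using arg_cong[OF e, of Re] by simp
  have e2: "R * sin (q1 + q2 + q3 + q4) = 0"
    using arg_cong[OF e, of Im] by simp
  have sn: "sin (q1 + q2 + q3 + q4) = 0" using e2 Rp by simp
  have cs: "cos (q1 + q2 + q3 + q4) \<ge> 0" using e1 Rp by (metis zero_le_mult_iff zero_le_power2 linorder_not_le)
  have "(cos (q1 + q2 + q3 + q4))^2 = 1" using sin_cos_squared_add[of "q1 + q2 + q3 + q4"] sn by simp
  hence "cos (q1 + q2 + q3 + q4) = 1" using cs by (simp add: power2_eq_1_iff)
  then obtain n :: int where n0: "q1 + q2 + q3 + q4 = of_int n * 2 * pi" using cos_one_2pi_int by blast
  have n: "q1 + q2 + q3 + q4 = of_int n * (2 * pi)" using n0 by simp
  have "of_int n * (2*pi) > 0" using n g2 g3 q1 q4 g by linarith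
  hence n1: "n \<ge> 1" by (simp add: zero_less_mult_iff)
  have "of_int n * (2*pi) \<le> 4 * pi" using n q1 q2 q3 q4 by linarith
  hence "(of_int n - 2) * (2*pi) \<le> 0" by (simp add: algebra_simps)
  hence "of_int n - 2 \<le> (0::real)" using pi_gt_zero by (simp add: mult_le_0_iff)
  hence n2: "n \<le> 2" by simp
  show ?thesis
  proof (cases "n = 1")
    case True
    hence sum: "q1 + q2 = 2 * pi - q3 - q4" using n by simp
    have c: "cos (q1 + q2) \<le> cos g"
    proof (cases "q1 + q2 \<le> pi")
      case True then show ?thesis using g2 q1 g by (subst cos_mono_le_eq) auto
    next
      case False
      have "cos (q1 + q2) = cos (2 * pi - (q1 + q2))" by simp
      also have "\<dots> \<le> cos g" using False sum g3 q4 g by (subst cos_mono_le_eq) auto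
      finally show ?thesis .
    qed
    have "W1 * W2 = of_real (r1 * r2) * (cis q1 * cis q2)"
      unfolding eq by (simp add: mult_ac)
    also have "cis q1 * cis q2 = cis (q1 + q2)" by (simp add: cis_mult)
    finally have w12: "W1 * W2 = of_real (r1 * r2) * cis (q1 + q2)" .
    have r12: "0 \<le> r1" "0 \<le> r2" using r by simp_all
    have rr: "0 \<le> r1 * r2" using r by simp
    have "r1 * r2 * cos (q1 + q2) \<le> r1 * r2 * cos g"
      using mult_left_mono[OF c rr] .
    moreover have "Re (W1 * W2) = r1 * r2 * cos (q1 + q2)" by (simp add: w12)
    moreover have "cmod (W1 * W2) = r1 * r2" using r12 by (simp add: w12 norm_mult)
    ultimately show ?thesis by (simp add: mult.commute)
  next
    case False
    hence "n = 2" using n1 n2 by simp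
    hence all: "q1 = pi" "q2 = pi" "q3 = pi" using n q1 q2 q3 q4 by auto
    have neg: "W1 = - of_real r1" "W2 = - of_real r2" "W3 = - of_real r3"
      using eq all by simp_all
    have lin: "z = (z * cnj w / of_real (cmod w ^ 2)) * w" if "w \<noteq> 0" for z w :: complex
      using that by (simp add: complex_norm_square[symmetric] field_simps)
    define mu where "mu = r3 / cmod x1 ^ 2"
    define nu where "nu = r2 / cmod x4 ^ 2"
    have mu: "mu > 0" unfolding mu_def using nz nz3 r by simp
    have nu: "nu > 0" unfolding nu_def using nz nW r by simp
    have e4: "x4 = of_real mu * x1"
    proof -
      have "x4 = (x4 * cnj x1 / of_real (cmod x1 ^ 2)) * x1" using lin nz by blast
      also have "x4 * cnj x1 = of_real r3"
      proof -
        have "cnj W3 = - of_real r3" using neg(3) by (metis complex_cnj_minus complex_cnj_complex_of_real)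
        thus ?thesis unfolding W3_def by (simp add: mult.commute)
      qed
      finally show ?thesis unfolding mu_def by simp
    qed
    have e2: "x2 = of_real nu * x4"
    proof -
      have "x2 = (x2 * cnj x4 / of_real (cmod x4 ^ 2)) * x4" using lin nz by blast
      also have "x2 * cnj x4 = of_real r2"
      proof -
        have "cnj W2 = - of_real r2" using neg(2) by (metis complex_cnj_minus complex_cnj_complex_of_real)
        thus ?thesis unfolding W2_def by (simp add: mult.commute)
      qed
      finally show ?thesis unfolding nu_def by simp
    qed
    have h: "of_real ((1 + mu + nu * mu) * cmod x1 ^ 2) = of_real (1 + mu + nu*mu) * (x1 * cnj x1)"
      by (simp only: of_real_mult complex_norm_square)
    have "W1 = of_real ((1 + mu + nu * mu) * cmod x1 ^ 2)"
      unfolding h W1_def e2 e4 by (simp add: algebra_simps)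
    moreover have "(1 + mu + nu * mu) * cmod x1 ^ 2 > 0" using mu nu nz by (intro mult_pos_pos) (auto intro: add_pos_pos)
    ultimately have "- r1 = (1 + mu + nu * mu) * cmod x1 ^ 2" using neg(1) by (metis of_real_eq_iff of_real_minus)
    moreover have "r1 \<ge> 0" using r by simp
    ultimately show ?thesis using \<open>(1 + mu + nu * mu) * cmod x1 ^ 2 > 0\<close> by linarith
  qed
qed



lemma bound3:
  assumes al: "0 < al" "al < pi" and be: "0 < be" "be < pi" "al + be \<ge> pi" and xyz: "x < y" "y < z"
    and sp: "sin ((al + be - pi)/2) > 0"
  shows "(cmod (bd_param al be x - bd_param al be y) + cmod (bd_param al be y - bd_param al be z))
          / cmod (bd_param al be x - bd_param al be z) \<le> 1 / sin ((al + be - pi)/2)"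
proof -
  define A where "A = bd_param al be x"
  define B where "B = bd_param al be y"
  define C where "C = bd_param al be z"
  have tr: "Re ((A - B) * cnj (C - B)) \<le> cos (al + be - pi) * cmod ((A - B) * cnj (C - B))"
    using triple[OF al be xyz] unfolding A_def B_def C_def by blast
  have "Re ((A - B) * cnj (C - B)) \<le> cos (al + be - pi) * (cmod (A - B) * cmod (C - B))"
    using tr by (simp only: norm_mult complex_mod_cnj)
  from tri_bound[of "al + be - pi", OF _ _ this] al be
  have h: "(cmod (A - B) + cmod (C - B)) * sin ((al + be - pi)/2) \<le> cmod (A - C)" by simp
  have "(cmod (A - B) + cmod (B - C)) / cmod (A - C) \<le> 1 / sin ((al + be - pi)/2)"
  proof (cases "cmod (A - C) = 0")
    case True then show ?thesis using sp by simp
  next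
    case False
    then show ?thesis using h sp by (simp add: divide_simps norm_minus_commute mult.commute)
  qed
  then show ?thesis unfolding A_def B_def C_def .
qed

lemma orient1: "Im ((A - D) * cnj (A - B)) = Im ((A - B) * cnj (D - B))"
  by (simp add: algebra_simps)
lemma orient2: "Im ((C - D) * cnj (A - D)) = Im ((A - C) * cnj (D - C))"
  by (simp add: algebra_simps)

lemma bound4:
  assumes al: "0 < al" "al < pi" and be: "0 < be" "be < pi" "al + be \<ge> pi"
    and xyz: "a < b" "b < c" "c < d"
    and sp: "sin ((al + be - pi)/2) > 0"
  defines "A \<equiv> bd_param al be a" and "B \<equiv> bd_param al be b" and "C \<equiv> bd_param al be c" and "D \<equiv> bd_param al be d"
  shows "(cmod (A - B) * cmod (C - D) + cmod (A - D) * cmod (B - C)) / (cmod (A - C) * cmod (B - D))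
          \<le> 1 / sin ((al + be - pi)/2)"
proof -
  define g where "g = al + be - pi"
  have g: "0 < g" "g \<le> pi" using sp al be unfolding g_def by (auto intro: ccontr)
  define x1 where "x1 = A - B"
  define x4 where "x4 = B - C"
  define x2 where "x2 = C - D"
  have x3: "x1 + x4 + x2 = A - D" unfolding x1_def x4_def x2_def by simp
  have t_abd: "0 \<le> Im ((A - B) * cnj (D - B))"
    using triple[OF al be xyz(1) _] xyz unfolding A_def B_def D_def by auto
  have t_bcd: "0 \<le> Im ((B - C) * cnj (D - C)) \<and> Re ((B - C) * cnj (D - C)) \<le> cos g * cmod ((B - C) * cnj (D - C))"
    using triple[OF al be xyz(2) xyz(3)] unfolding B_def C_def D_def g_def by blast
  have t_abc: "0 \<le> Im ((A - B) * cnj (C - B)) \<and> Re ((A - B) * cnj (C - B)) \<le> cos g * cmod ((A - B) * cnj (C - B))"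
    using triple[OF al be xyz(1) xyz(2)] unfolding A_def B_def C_def g_def by blast
  have t_acd: "0 \<le> Im ((A - C) * cnj (D - C))"
    using triple[OF al be _ xyz(3)] xyz unfolding A_def C_def D_def by auto
  have w2: "- x4 * cnj x2 = (B - C) * cnj (D - C)" unfolding x4_def x2_def by (simp add: algebra_simps)
  have w3: "- x1 * cnj x4 = (A - B) * cnj (C - B)" unfolding x1_def x4_def by (simp add: algebra_simps)
  have qc: "Re (((x1 + x4 + x2) * cnj x1) * (- x4 * cnj x2)) \<le> cos g * cmod (((x1 + x4 + x2) * cnj x1) * (- x4 * cnj x2))"
  proof (rule quad_comb[OF g])
    show "0 \<le> Im ((x1 + x4 + x2) * cnj x1)" unfolding x3 unfolding x1_def using t_abd orient1 by metis
    show "0 \<le> Im (- x4 * cnj x2)" unfolding w2 using t_bcd by blast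
    show "0 \<le> Im (- x1 * cnj x4)" unfolding w3 using t_abc by blast
    show "0 \<le> Im (x2 * cnj (x1 + x4 + x2))" unfolding x3 unfolding x2_def using t_acd orient2 by metis
    show "Re (- x4 * cnj x2) \<le> cos g * cmod (- x4 * cnj x2)" unfolding w2 using t_bcd by blast
    show "Re (- x1 * cnj x4) \<le> cos g * cmod (- x1 * cnj x4)" unfolding w3 using t_abc by blast
  qed
  define p1 where "p1 = - (x1 * x2)"
  define p2 where "p2 = (x1 + x4 + x2) * x4"
  have cc: "cnj (p1 * cnj p2) = ((x1 + x4 + x2) * cnj x1) * (- x4 * cnj x2)"
    unfolding p1_def p2_def by (simp add: algebra_simps)
  have "Re (p1 * cnj p2) \<le> cos g * (cmod p1 * cmod p2)"
  proof -
    obtain Z where Z: "Z = ((x1 + x4 + x2) * cnj x1) * (- x4 * cnj x2)" by blast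
    have "Re (p1 * cnj p2) = Re (cnj (p1 * cnj p2))" by simp
    also have "\<dots> = Re Z" using cc Z by simp
    finally have 1: "Re (p1 * cnj p2) = Re Z" .
    have "cmod p1 * cmod p2 = cmod (cnj (p1 * cnj p2))" by (simp only: complex_mod_cnj norm_mult)
    also have "\<dots> = cmod Z" using cc Z by simp
    finally have 2: "cmod p1 * cmod p2 = cmod Z" .
    show ?thesis unfolding 1 2 using qc Z by simp
  qed
  from tri_bound[OF _ _ this] g
  have h: "(cmod p1 + cmod p2) * sin (g/2) \<le> cmod (p1 - p2)" by simp
  have n1: "cmod p1 + cmod p2 = cmod (A - B) * cmod (C - D) + cmod (A - D) * cmod (B - C)"
    unfolding p1_def p2_def x3 x1_def x2_def x4_def by (simp add: norm_mult)
  have "p1 - p2 = - ((A - C) * (B - D))"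
    unfolding p1_def p2_def x1_def x2_def x4_def by (simp add: algebra_simps)
  hence n2: "cmod (p1 - p2) = cmod (A - C) * cmod (B - D)" by (simp add: norm_mult)
  have sp': "sin (g/2) > 0" using sp unfolding g_def .
  show ?thesis
  proof (cases "cmod (A - C) * cmod (B - D) = 0")
    case True
    hence "(cmod (A - B) * cmod (C - D) + cmod (A - D) * cmod (B - C)) / (cmod (A - C) * cmod (B - D)) = 0"
      by (simp only: division_ring_divide_zero)
    moreover have "0 \<le> 1 / sin ((al + be - pi)/2)" using sp by simp
    ultimately show ?thesis by linarith
  next
    case False
    hence "cmod (A - C) * cmod (B - D) > 0" by (simp add: less_le)
    then show ?thesis using h sp' n1 n2 unfolding g_def by (simp add: divide_simps mult.commute)
  qed
qed



lemma pq_rot: "pq x1 x2 x3 x4 = pq x2 x3 x4 x1"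
  by (cases x1; cases x2; cases x3; cases x4) (auto simp: norm_minus_commute algebra_simps)

lemma lin_bound:
  assumes al: "0 < al" "al < pi" and be: "0 < be" "be < pi" "al + be \<ge> pi"
    and sp: "sin ((al + be - pi)/2) > 0"
    and o: "olt x1 x2" "olt x2 x3" "olt x3 x4"
  shows "pq (bd_pt al be x1) (bd_pt al be x2) (bd_pt al be x3) (bd_pt al be x4) \<le> 1 / sin ((al + be - pi)/2)"
proof -
  obtain a where a: "x1 = Some a" using o(1) by (cases x1) auto
  obtain b where b: "x2 = Some b" using o(2) by (cases x2) auto
  obtain c where c: "x3 = Some c" using o(3) by (cases x3) auto
  have ab: "a < b" "b < c" using o a b c by auto
  show ?thesis
  proof (cases x4)
    case None
    then show ?thesis using bound3[OF al be ab sp] a b c by (simp add: bd_pt_def)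
  next
    case (Some d)
    then have "c < d" using o c by simp
    then show ?thesis using bound4[OF al be ab \<open>c < d\<close> sp] a b c Some by (simp add: bd_pt_def)
  qed
qed

lemma cyc_bound:
  assumes al: "0 < al" "al < pi" and be: "0 < be" "be < pi" "al + be \<ge> pi"
    and sp: "sin ((al + be - pi)/2) > 0"
    and o: "cyc_ord4 x1 x2 x3 x4"
  shows "pq (bd_pt al be x1) (bd_pt al be x2) (bd_pt al be x3) (bd_pt al be x4) \<le> 1 / sin ((al + be - pi)/2)"
proof -
  let ?f = "bd_pt al be"
  have r1: "pq (?f x1) (?f x2) (?f x3) (?f x4) = pq (?f x2) (?f x3) (?f x4) (?f x1)" by (rule pq_rot)
  have r2: "pq (?f x2) (?f x3) (?f x4) (?f x1) = pq (?f x3) (?f x4) (?f x1) (?f x2)" by (rule pq_rot)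
  have r3: "pq (?f x3) (?f x4) (?f x1) (?f x2) = pq (?f x4) (?f x1) (?f x2) (?f x3)" by (rule pq_rot)
  from o show ?thesis unfolding cyc_ord4_def
  proof (elim disjE conjE)
    assume "olt x1 x2" "olt x2 x3" "olt x3 x4" then show ?thesis using lin_bound[OF al be sp] by blast
  next
    assume "olt x2 x3" "olt x3 x4" "olt x4 x1" then show ?thesis using lin_bound[OF al be sp] r1 by metis
  next
    assume "olt x3 x4" "olt x4 x1" "olt x1 x2" then show ?thesis using lin_bound[OF al be sp] r1 r2 by metis
  next
    assume "olt x4 x1" "olt x1 x2" "olt x2 x3" then show ?thesis using lin_bound[OF al be sp] r1 r2 r3 by metis
  qed
qed

lemma cis_diff_norm: "(cmod (cis a - cis b))^2 = 2 - 2 * cos (a - b)"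
proof -
  have "(cmod (cis a - cis b))^2 = (cos a - cos b)^2 + (sin a - sin b)^2"
    by (simp add: cmod_power2 cis.sel)
  also have "\<dots> = (sin a ^ 2 + cos a ^ 2) + (sin b ^ 2 + cos b ^ 2) - 2 * (cos a * cos b + sin a * sin b)"
    by (simp add: power2_eq_square algebra_simps)
  also have "\<dots> = 2 - 2 * cos (a - b)" by (simp add: cos_diff)
  finally show ?thesis .
qed

definition wit :: "real \<Rightarrow> real option \<times> real option \<times> real option \<times> real option" where
  "wit R = (Some (1 + R), None, Some (-R), Some 0)"

lemma wit_ord: "R > 0 \<Longrightarrow> cyc_ord4 (Some (1 + R)) None (Some (-R)) (Some 0)"
  unfolding cyc_ord4_def by simp

lemma wit_val:
  assumes "R > 0"
  shows "pq (bd_pt al be (Some (1 + R))) (bd_pt al be None) (bd_pt al be (Some (-R))) (bd_pt al be (Some 0))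
       = (R + cmod (1 + of_real R * cis (pi - be))) / cmod (1 + of_real R * cis (pi - be) - of_real R * cis al)"
  using assms by (simp add: bd_pt_def bd_param_def norm_mult)

lemma den_re:
  assumes al: "0 < al" "al < pi" and be: "0 < be" "be < pi" "al + be \<ge> pi" and R: "R \<ge> 0"
  shows "1 \<le> cmod (1 + of_real R * cis (pi - be) - of_real R * cis al)"
proof -
  have "cos be \<le> cos (pi - al)" using al be by (subst cos_mono_le_eq) auto
  hence c: "0 \<le> - cos be - cos al" by simp
  have "Re (1 + of_real R * cis (pi - be) - of_real R * cis al) = 1 + R * (- cos be - cos al)"
    by (simp add: cis.sel algebra_simps)
  also have "\<dots> \<ge> 1" using c R by simp
  finally show ?thesis using complex_Re_le_cmod order_trans by blast
qed

lemma num_bound: "R \<ge> 0 \<Longrightarrow> 2 * R - 1 \<le> R + cmod (1 + of_real R * cis t)"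
proof -
  assume R: "R \<ge> 0"
  have "cmod (of_real R * cis t) - cmod (1::complex) \<le> cmod (of_real R * cis t + 1)" by (rule norm_diff_ineq)
  thus ?thesis using R by (simp add: norm_mult add.commute)
qed

theorem main_thm:
  fixes \<alpha> \<beta> :: real
  assumes "0 < \<alpha>" "\<alpha> < pi" "0 < \<beta>" "\<beta> < pi" "\<alpha> + \<beta> \<ge> pi"
  shows "P_double \<alpha> \<beta> =
    (let m = min \<alpha> (min \<beta> (\<alpha> + \<beta> - pi)) in
       if sin (m / 2) = 0 then \<infinity> else ereal (1 / sin (m / 2)))"
proof -
  note al = assms(1,2) and be = assms(3,4,5)
  define g where "g = \<alpha> + \<beta> - pi"
  have m: "min \<alpha> (min \<beta> (\<alpha> + \<beta> - pi)) = g" using assms unfolding g_def by auto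
  have g: "0 \<le> g" "g < pi" using assms unfolding g_def by auto
  define S where "S = {ereal (pq (bd_pt \<alpha> \<beta> x1) (bd_pt \<alpha> \<beta> x2) (bd_pt \<alpha> \<beta> x3) (bd_pt \<alpha> \<beta> x4))
                          | x1 x2 x3 x4. cyc_ord4 x1 x2 x3 x4}"
  have P: "P_double \<alpha> \<beta> = Sup S" unfolding P_double_def S_def ..
  define val where "val R = (R + cmod (1 + of_real R * cis (pi - \<beta>))) / cmod (1 + of_real R * cis (pi - \<beta>) - of_real R * cis \<alpha>)" for R
  have inS: "ereal (val R) \<le> Sup S" if "R > 0" for R
  proof -
    have "ereal (val R) \<in> S" unfolding S_def val_def
      using wit_ord[OF that] wit_val[OF that, of \<alpha> \<beta>] by (intro CollectI) metis
    thus ?thesis by (rule Sup_upper)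
  qed
  have dpos: "cmod (1 + of_real R * cis (pi - \<beta>) - of_real R * cis \<alpha>) > 0" if "R \<ge> 0" for R
    using den_re[OF al be that] by linarith
  have v1: "val 1 > 0" unfolding val_def using dpos[of 1] by (intro divide_pos_pos) (auto intro: add_pos_nonneg)
  have fin: "\<exists>z. Sup S = ereal z" if "Sup S \<noteq> \<infinity>"
  proof -
    have "ereal (val 1) \<le> Sup S" using inS by simp
    hence "Sup S \<noteq> - \<infinity>" by auto
    thus ?thesis using that by (cases "Sup S") auto
  qed
  show ?thesis
  proof (cases "sin (g / 2) = 0")
    case True
    hence "g = 0" using g sin_gt_zero[of "g/2"] by (cases "g = 0") auto
    hence ea: "cis \<alpha> = cis (pi - \<beta>)" proof -
      have "\<alpha> = pi - \<beta>" using \<open>g = 0\<close> unfolding g_def by simp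
      thus ?thesis by simp
    qed
    have "Sup S = \<infinity>"
    proof (rule ccontr)
      assume "Sup S \<noteq> \<infinity>"
      then obtain z where z: "Sup S = ereal z" using fin by blast
      define R where "R = \<bar>z\<bar> + 1"
      have R: "R > 0" unfolding R_def by simp
      have "val R = R + cmod (1 + of_real R * cis (pi - \<beta>))" unfolding val_def ea by simp
      hence "val R \<ge> R" by simp
      moreover have "val R \<le> z" using inS[OF R] z by simp
      ultimately show False unfolding R_def by linarith
    qed
    then show ?thesis using P m True by simp
  next
    case False
    define s where "s = sin (g / 2)"
    have sp: "s > 0" using False g unfolding s_def by (intro sin_gt_zero) (auto simp: less_le)
    have ub: "Sup S \<le> ereal (1 / s)"
    proof (rule Sup_least)
      fix x assume "x \<in> S"
      then obtain x1 x2 x3 x4 where "x = ereal (pq (bd_pt \<alpha> \<beta> x1) (bd_pt \<alpha> \<beta> x2) (bd_pt \<alpha> \<beta> x3) (bd_pt \<alpha> \<beta> x4))"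
        "cyc_ord4 x1 x2 x3 x4" unfolding S_def by blast
      then show "x \<le> ereal (1 / s)" using cyc_bound[OF al be _ \<open>cyc_ord4 x1 x2 x3 x4\<close>] sp
        unfolding s_def g_def by simp
    qed
    have ef: "cmod (cis (pi - \<beta>) - cis \<alpha>) \<le> 2 * s"
    proof -
      have "(cmod (cis (pi - \<beta>) - cis \<alpha>))^2 = 2 - 2 * cos (pi - \<beta> - \<alpha>)" by (rule cis_diff_norm)
      also have "cos (pi - \<beta> - \<alpha>) = cos g"
      proof -
        have "pi - \<beta> - \<alpha> = - g" unfolding g_def by simp
        thus ?thesis by simp
      qed
      also have "cos g = 1 - 2 * s^2"
      proof -
        have "cos g = cos (2 * (g/2))" by simp
        also have "\<dots> = 1 - 2 * (sin (g/2))^2" by (rule cos_double_sin)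
        finally show ?thesis unfolding s_def .
      qed
      finally have "(cmod (cis (pi - \<beta>) - cis \<alpha>))^2 = (2 * s)^2" by (simp add: power2_eq_square)
      hence "(cmod (cis (pi - \<beta>) - cis \<alpha>))^2 \<le> (2 * s)^2" by simp
      from power2_le_imp_le[OF this] sp show ?thesis by simp
    qed
    have low: "(2 * R - 1) / (1 + 2 * R * s) \<le> val R" if "R \<ge> 1" for R
    proof -
      have "cmod (1 + of_real R * cis (pi - \<beta>) - of_real R * cis \<alpha>) = cmod (1 + of_real R * (cis (pi - \<beta>) - cis \<alpha>))"
        by (simp add: algebra_simps)
      also have "\<dots> \<le> 1 + cmod (of_real R * (cis (pi - \<beta>) - cis \<alpha>))" using norm_triangle_ineq[of "1::complex"] by simp
      also have "\<dots> \<le> 1 + 2 * R * s" using ef that by (simp add: norm_mult mult_left_mono mult.assoc)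
      finally have d: "cmod (1 + of_real R * cis (pi - \<beta>) - of_real R * cis \<alpha>) \<le> 1 + 2 * R * s" .
      show ?thesis unfolding val_def
        by (rule frac_le) (use that num_bound[of R "pi - \<beta>"] dpos[of R] d in auto)
    qed
    have lb: "ereal (1 / s) \<le> Sup S"
    proof (rule ccontr)
      assume "\<not> ereal (1 / s) \<le> Sup S"
      hence lt: "Sup S < ereal (1 / s)" by simp
      then obtain z where z: "Sup S = ereal z" using fin by fastforce
      have zs: "z * s < 1" using lt z sp by (simp add: field_simps)
      define R where "R = max 1 ((1 + z) / (2 * (1 - z * s)) + 1)"
      have R1: "R \<ge> 1" unfolding R_def by simp
      have "(1 + z) / (2 * (1 - z * s)) < R" unfolding R_def by simp
      hence "1 + z < R * (2 * (1 - z * s))" using zs by (simp add: divide_less_eq)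
      hence "z * (1 + 2 * R * s) < 2 * R - 1" by (simp add: algebra_simps)
      moreover have pos: "0 < 1 + 2 * R * s" using sp R1 by (intro add_pos_nonneg) auto
      ultimately have "z < (2 * R - 1) / (1 + 2 * R * s)" by (simp add: less_divide_eq)
      also have "\<dots> \<le> val R" using low[OF R1] .
      also have "val R \<le> z" using inS[of R] R1 z by simp
      finally show False by simp
    qed
    have "Sup S = ereal (1 / s)" using ub lb by (rule antisym)
    then show ?thesis using P m False unfolding s_def by simp
  qed
qed


theorem theorem1p4:
  fixes \<alpha> \<beta> :: real
  assumes "0 < \<alpha>" "\<alpha> < pi" "0 < \<beta>" "\<beta> < pi" "\<alpha> + \<beta> \<ge> pi"
  shows "P_double \<alpha> \<beta> =
    (let m = min \<alpha> (min \<beta> (\<alpha> + \<beta> - pi)) in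
       if sin (m / 2) = 0 then \<infinity> else ereal (1 / sin (m / 2)))"
  by (rule main_thm[OF assms])

end
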